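(* Let $\Sigma^n\subset\mathbb{C}^n$ be a Lagrangian self-shrinker. Then for every smooth function $f$ on $\Sigma$, $$L(J\nabla f)=J\nabla(\mathcal{L}f+f).$$ In particular, the space of Hamiltonian normal vector fields $\{J\nabla f\}$ is invariant under $L$.
   Context: A self-shrinker is a submanifold $\Sigma^n\subset\mathbb{R}^{n+p}$ with $H=-\frac12x^\perp$, where $A(X,Y)=(\bar\nabla_XY)^\perp$ and $H=\mathrm{tr}A$. A Lagrangian self-shrinker is one in $\mathbb{C}^n\cong\mathbb{R}^{2n}$ that is Lagrangian; $J$ is the standard complex structure, so $J\nabla f$ is a normal vector field. $\mathcal{L}v=\Delta v-\frac12\langle x,\nabla v\rangle$ on functions. For a normal vector field $V$, with $\{e_i\}$ a local orthonormal tangent frame, $LV=\Delta^\perp V-\frac12\nabla^\perp_{x^T}V+\sum_{i,j}\langle A(e_i,e_j),V\rangle A(e_i,e_j)+\frac12V$, where $\nabla^\perp$ is the normal connection, $\Delta^\perp$ the normal Laplacian and $x^T$ the tangential part of $x$. *)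

theory Defs
  imports "HOL-Analysis.Analysis"
begin

text \<open>Local coordinate description of an immersed submanifold
  F : U \<subseteq> R^n \<rightarrow> C^n (= R^2n with the real inner product Re(z * cnj w) in each
  component). All geometric quantities are written in the coordinates u of the chart.\<close>

definition pd :: "'n::finite \<Rightarrow> (real^'n \<Rightarrow> 'b::real_normed_vector) \<Rightarrow> real^'n \<Rightarrow> 'b" where
  "pd i G u = frechet_derivative G (at u) (axis i 1)"

fun iter_pd :: "'n::finite list \<Rightarrow> (real^'n \<Rightarrow> 'b::real_normed_vector) \<Rightarrow> real^'n \<Rightarrow> 'b" where
  "iter_pd [] G = G"
| "iter_pd (i # ks) G = pd i (iter_pd ks G)"

definition smooth_on :: "(real^'n::finite) set \<Rightarrow> (real^'n \<Rightarrow> 'b::real_normed_vector) \<Rightarrow> bool" where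
  "smooth_on U G \<longleftrightarrow> (\<forall>ks. \<forall>u\<in>U. iter_pd ks G differentiable (at u))"

definition Jc :: "complex^'n \<Rightarrow> complex^'n" where
  "Jc v = (\<chi> k. \<i> * v $ k)"

definition gmat :: "(real^'n::finite \<Rightarrow> complex^'n) \<Rightarrow> real^'n \<Rightarrow> real^'n^'n" where
  "gmat F u = (\<chi> i j. inner (pd i F u) (pd j F u))"

definition ginv :: "(real^'n::finite \<Rightarrow> complex^'n) \<Rightarrow> real^'n \<Rightarrow> 'n \<Rightarrow> 'n \<Rightarrow> real" where
  "ginv F u i j = matrix_inv (gmat F u) $ i $ j"

definition tproj :: "(real^'n::finite \<Rightarrow> complex^'n) \<Rightarrow> real^'n \<Rightarrow> complex^'n \<Rightarrow> complex^'n" where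
  "tproj F u v = (\<Sum>i\<in>UNIV. \<Sum>j\<in>UNIV. (ginv F u i j * inner v (pd j F u)) *\<^sub>R pd i F u)"

definition nproj :: "(real^'n::finite \<Rightarrow> complex^'n) \<Rightarrow> real^'n \<Rightarrow> complex^'n \<Rightarrow> complex^'n" where
  "nproj F u v = v - tproj F u v"

definition sff :: "(real^'n::finite \<Rightarrow> complex^'n) \<Rightarrow> real^'n \<Rightarrow> 'n \<Rightarrow> 'n \<Rightarrow> complex^'n" where
  "sff F u i j = nproj F u (pd i (pd j F) u)"

definition meancurv :: "(real^'n::finite \<Rightarrow> complex^'n) \<Rightarrow> real^'n \<Rightarrow> complex^'n" where
  "meancurv F u = (\<Sum>i\<in>UNIV. \<Sum>j\<in>UNIV. ginv F u i j *\<^sub>R sff F u i j)"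

definition christoffel :: "(real^'n::finite \<Rightarrow> complex^'n) \<Rightarrow> real^'n \<Rightarrow> 'n \<Rightarrow> 'n \<Rightarrow> 'n \<Rightarrow> real" where
  "christoffel F u k i j = (\<Sum>l\<in>UNIV. ginv F u k l * inner (pd i (pd j F) u) (pd l F u))"

definition grad :: "(real^'n::finite \<Rightarrow> complex^'n) \<Rightarrow> (real^'n \<Rightarrow> real) \<Rightarrow> real^'n \<Rightarrow> complex^'n" where
  "grad F f u = (\<Sum>i\<in>UNIV. \<Sum>j\<in>UNIV. (ginv F u i j * pd j f u) *\<^sub>R pd i F u)"

definition laplace :: "(real^'n::finite \<Rightarrow> complex^'n) \<Rightarrow> (real^'n \<Rightarrow> real) \<Rightarrow> real^'n \<Rightarrow> real" where
  "laplace F f u = (\<Sum>i\<in>UNIV. \<Sum>j\<in>UNIV. ginv F u i j *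
       (pd i (pd j f) u - (\<Sum>k\<in>UNIV. christoffel F u k i j * pd k f u)))"

definition driftL :: "(real^'n::finite \<Rightarrow> complex^'n) \<Rightarrow> (real^'n \<Rightarrow> real) \<Rightarrow> real^'n \<Rightarrow> real" where
  "driftL F f u = laplace F f u - (1/2) * inner (F u) (grad F f u)"

text \<open>Normal connection \<nabla>^\<perp>_{\<partial>_i} V = (D_{\<partial>_i} V)^\<perp>, normal Laplacian,
  and the coordinates of x^T = sum_k X^k \<partial>_k F.\<close>
definition nabn :: "(real^'n::finite \<Rightarrow> complex^'n) \<Rightarrow> 'n \<Rightarrow> (real^'n \<Rightarrow> complex^'n) \<Rightarrow> real^'n \<Rightarrow> complex^'n" where
  "nabn F i V u = nproj F u (pd i V u)"

definition nlaplace :: "(real^'n::finite \<Rightarrow> complex^'n) \<Rightarrow> (real^'n \<Rightarrow> complex^'n) \<Rightarrow> real^'n \<Rightarrow> complex^'n" where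
  "nlaplace F V u = (\<Sum>i\<in>UNIV. \<Sum>j\<in>UNIV. ginv F u i j *\<^sub>R
       (nabn F i (nabn F j V) u - (\<Sum>k\<in>UNIV. christoffel F u k i j *\<^sub>R nabn F k V u)))"

definition xT_coord :: "(real^'n::finite \<Rightarrow> complex^'n) \<Rightarrow> real^'n \<Rightarrow> 'n \<Rightarrow> real" where
  "xT_coord F u k = (\<Sum>l\<in>UNIV. ginv F u k l * inner (F u) (pd l F u))"

text \<open>The operator L on normal vector fields. The term sum over an orthonormal frame
  of <A(e_i,e_j),V> A(e_i,e_j) is written as g^ik g^jl <A_ij,V> A_kl.\<close>
definition Lop :: "(real^'n::finite \<Rightarrow> complex^'n) \<Rightarrow> (real^'n \<Rightarrow> complex^'n) \<Rightarrow> real^'n \<Rightarrow> complex^'n" where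
  "Lop F V u = nlaplace F V u
     - (1/2) *\<^sub>R (\<Sum>k\<in>UNIV. xT_coord F u k *\<^sub>R nabn F k V u)
     + (\<Sum>i\<in>UNIV. \<Sum>j\<in>UNIV. \<Sum>k\<in>UNIV. \<Sum>l\<in>UNIV.
          (ginv F u i k * ginv F u j l * inner (sff F u i j) (V u)) *\<^sub>R sff F u k l)
     + (1/2) *\<^sub>R V u"

definition immersion_on :: "(real^'n::finite) set \<Rightarrow> (real^'n \<Rightarrow> complex^'n) \<Rightarrow> bool" where
  "immersion_on U F \<longleftrightarrow> (\<forall>u\<in>U. inj (frechet_derivative F (at u)))"

definition lagrangian_on :: "(real^'n::finite) set \<Rightarrow> (real^'n \<Rightarrow> complex^'n) \<Rightarrow> bool" where
  "lagrangian_on U F \<longleftrightarrow> (\<forall>u\<in>U. \<forall>i j. inner (Jc (pd i F u)) (pd j F u) = 0)"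

definition self_shrinker_on :: "(real^'n::finite) set \<Rightarrow> (real^'n \<Rightarrow> complex^'n) \<Rightarrow> bool" where
  "self_shrinker_on U F \<longleftrightarrow> (\<forall>u\<in>U. meancurv F u = - (1/2) *\<^sub>R nproj F u (F u))"

end

theory Submission
  imports Defs
begin


lemma pd_eq: "(G has_derivative G') (at v) \<Longrightarrow> pd i G v = G' (axis i 1)"
  by (simp add: pd_def frechet_derivative_at[symmetric])

lemma pd_local:
  assumes "open S" "v \<in> S" "\<And>w. w \<in> S \<Longrightarrow> a w = b w"
  shows "pd i a v = pd i b v"
proof -
  have "\<And>D. (a has_derivative D) (at v) \<longleftrightarrow> (b has_derivative D) (at v)"
    using assms has_derivative_transform_within_open[of a _ v UNIV S b]
      has_derivative_transform_within_open[of b _ v UNIV S a] by (metis)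
  then show ?thesis by (simp add: pd_def frechet_derivative_def)
qed

lemma diff_local:
  assumes "open S" "v \<in> S" "\<And>w. w \<in> S \<Longrightarrow> a w = b w" "a differentiable (at v)"
  shows "b differentiable (at v)"
  using assms has_derivative_transform_within_open[of a _ v UNIV S b] unfolding differentiable_def
  by metis

lemma pd_inner:
  assumes "a differentiable (at v)" "b differentiable (at v)"
  shows "pd i (\<lambda>w. inner (a w) (b w)) v = inner (pd i a v) (b v) + inner (a v) (pd i b v)"
proof -
  have "((\<lambda>w. inner (a w) (b w)) has_derivative
     (\<lambda>h. inner (a v) (frechet_derivative b (at v) h) + inner (frechet_derivative a (at v) h) (b v))) (at v)"
    using assms by (intro has_derivative_inner frechet_derivative_works[THEN iffD1])
  from pd_eq[OF this] show ?thesis by (simp add: pd_def)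
qed

lemma pd_scaleR:
  assumes "a differentiable (at v)" "b differentiable (at v)"
  shows "pd i (\<lambda>w. a w *\<^sub>R b w) v = pd i a v *\<^sub>R b v + a v *\<^sub>R pd i b v"
proof -
  have "((\<lambda>w. a w *\<^sub>R b w) has_derivative
     (\<lambda>h. a v *\<^sub>R (frechet_derivative b (at v) h) + (frechet_derivative a (at v) h) *\<^sub>R (b v))) (at v)"
    using assms by (intro has_derivative_scaleR frechet_derivative_works[THEN iffD1])
  from pd_eq[OF this] show ?thesis by (simp add: pd_def)
qed

lemma pd_mult:
  fixes a b :: "real^'n::finite \<Rightarrow> real"
  assumes "a differentiable (at v)" "b differentiable (at v)"
  shows "pd i (\<lambda>w. a w * b w) v = pd i a v * b v + a v * pd i b v"
  using pd_scaleR[OF assms] by simp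

lemma pd_add:
  assumes "a differentiable (at v)" "b differentiable (at v)"
  shows "pd i (\<lambda>w. a w + b w) v = pd i a v + pd i b v"
proof -
  have "((\<lambda>w. a w + b w) has_derivative
     (\<lambda>h. (frechet_derivative a (at v) h) + (frechet_derivative b (at v) h))) (at v)"
    using assms by (intro has_derivative_add frechet_derivative_works[THEN iffD1])
  from pd_eq[OF this] show ?thesis by (simp add: pd_def)
qed

lemma pd_diff:
  assumes "a differentiable (at v)" "b differentiable (at v)"
  shows "pd i (\<lambda>w. a w - b w) v = pd i a v - pd i b v"
proof -
  have "((\<lambda>w. a w - b w) has_derivative
     (\<lambda>h. (frechet_derivative a (at v) h) - (frechet_derivative b (at v) h))) (at v)"
    using assms by (intro has_derivative_diff frechet_derivative_works[THEN iffD1])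
  from pd_eq[OF this] show ?thesis by (simp add: pd_def)
qed

lemma pd_sum:
  assumes "finite I" "\<And>k. k \<in> I \<Longrightarrow> a k differentiable (at v)"
  shows "pd i (\<lambda>w. \<Sum>k\<in>I. a k w) v = (\<Sum>k\<in>I. pd i (a k) v)"
proof -
  have "((\<lambda>w. \<Sum>k\<in>I. a k w) has_derivative
     (\<lambda>h. \<Sum>k\<in>I. frechet_derivative (a k) (at v) h)) (at v)"
    using assms by (intro has_derivative_sum frechet_derivative_works[THEN iffD1]) auto
  from pd_eq[OF this] show ?thesis by (simp add: pd_def)
qed

lemma pd_const: "pd i (\<lambda>w. c) v = 0"
  by (simp add: pd_def)

lemma differentiable_inner [derivative_intros]:
  "a differentiable (at v) \<Longrightarrow> b differentiable (at v) \<Longrightarrow> (\<lambda>w. inner (a w) (b w)) differentiable (at v)"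
  unfolding differentiable_def by (blast intro: has_derivative_inner)

lemma differentiable_scaleR' [derivative_intros]:
  "a differentiable (at v) \<Longrightarrow> b differentiable (at v) \<Longrightarrow> (\<lambda>w. a w *\<^sub>R b w) differentiable (at v)"
  unfolding differentiable_def by (blast intro: has_derivative_scaleR)

lemma Jc_add: "Jc (x + y) = Jc x + Jc y" by (simp add: Jc_def vec_eq_iff distrib_left)
lemma Jc_scaleR: "Jc (r *\<^sub>R x) = r *\<^sub>R Jc x" by (simp add: Jc_def vec_eq_iff scaleR_conv_of_real)
lemma Jc_diff: "Jc (x - y) = Jc x - Jc y" by (simp add: Jc_def vec_eq_iff right_diff_distrib)
lemma Jc_zero [simp]: "Jc 0 = 0" by (simp add: Jc_def vec_eq_iff)
lemma Jc_sum: "Jc (\<Sum>k\<in>I. x k) = (\<Sum>k\<in>I. Jc (x k))"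
  by (induct I rule: infinite_finite_induct) (auto simp: Jc_add)
lemma inner_Jc_Jc: "inner (Jc x) (Jc y) = inner x y"
  by (simp add: Jc_def inner_vec_def inner_complex_def algebra_simps)
lemma inner_Jc_left: "inner (Jc x) y = - inner x (Jc y)"
  by (simp add: Jc_def inner_vec_def inner_complex_def algebra_simps sum_negf[symmetric])
lemma bounded_linear_Jc: "bounded_linear Jc"
proof (rule bounded_linear_intro[where K=1])
  fix x :: "complex^'n" show "norm (Jc x) \<le> norm x * 1"
    by (simp add: norm_eq_sqrt_inner inner_Jc_Jc)
qed (simp_all add: Jc_add Jc_scaleR)

lemma differentiable_Jc [derivative_intros]:
  "a differentiable (at v) \<Longrightarrow> (\<lambda>w. Jc (a w)) differentiable (at v)"
  unfolding differentiable_def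
  by (blast intro: bounded_linear.has_derivative[OF bounded_linear_Jc])

lemma pd_Jc:
  assumes "a differentiable (at v)"
  shows "pd i (\<lambda>w. Jc (a w)) v = Jc (pd i a v)"
proof -
  have "((\<lambda>w. Jc (a w)) has_derivative (\<lambda>h. Jc (frechet_derivative a (at v) h))) (at v)"
    using assms by (intro bounded_linear.has_derivative[OF bounded_linear_Jc] frechet_derivative_works[THEN iffD1])
  from pd_eq[OF this] show ?thesis by (simp add: pd_def)
qed



lemma schwarz_limit:
  fixes \<phi> :: "real^'n::finite \<Rightarrow> real"
  assumes U: "open U" "u \<in> U" and d1: "\<And>v. v \<in> U \<Longrightarrow> \<phi> differentiable (at v)"
    and d2: "\<And>v. v \<in> U \<Longrightarrow> pd i \<phi> differentiable (at v)"
  shows "((\<lambda>t. (\<phi> (u + t *\<^sub>R axis i 1 + t *\<^sub>R axis j 1) - \<phi> (u + t *\<^sub>R axis i 1)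
                 - \<phi> (u + t *\<^sub>R axis j 1) + \<phi> u) / t^2) \<longlongrightarrow> pd j (pd i \<phi>) u) (at_right 0)"
proof -
  define a :: "real^'n" where "a = axis i 1"
  define b :: "real^'n" where "b = axis j 1"
  have na: "norm a = 1" and nb: "norm b = 1" by (simp_all add: a_def b_def)
  define \<psi> where "\<psi> = pd i \<phi>"
  define L' where "L' = frechet_derivative \<psi> (at u)"
  have \<psi>d: "(\<psi> has_derivative L') (at u)" unfolding L'_def \<psi>_def using d2 U frechet_derivative_works by blast
  have L'lin: "linear L'" using \<psi>d has_derivative_linear by blast
  have Lval: "pd j (pd i \<phi>) u = L' b" unfolding pd_def L'_def \<psi>_def b_def ..
  obtain r where r: "r > 0" "ball u r \<subseteq> U" using U openE by blast
  have dirder: "((\<lambda>s. \<phi> (p + s *\<^sub>R a)) has_real_derivative \<psi> (p + z *\<^sub>R a)) (at z)"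
    if "p + z *\<^sub>R a \<in> U" for p z
  proof -
    have "(\<phi> has_derivative frechet_derivative \<phi> (at (p + z *\<^sub>R a))) (at (p + z *\<^sub>R a))"
      using d1 that frechet_derivative_works by blast
    moreover have "((\<lambda>s. p + s *\<^sub>R a) has_derivative (\<lambda>h. h *\<^sub>R a)) (at z)"
      by (auto intro!: derivative_eq_intros)
    ultimately have "((\<lambda>s. \<phi> (p + s *\<^sub>R a)) has_derivative
        (\<lambda>h. frechet_derivative \<phi> (at (p + z *\<^sub>R a)) (h *\<^sub>R a))) (at z)"
      using has_derivative_compose[of "\<lambda>s. p + s *\<^sub>R a" _ z UNIV \<phi>] by auto
    moreover have "linear (frechet_derivative \<phi> (at (p + z *\<^sub>R a)))"
      using d1 that by (simp add: linear_frechet_derivative)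
    ultimately show ?thesis
      unfolding has_field_derivative_def \<psi>_def pd_def a_def
      by (simp add: linear_cmul mult.commute[of _ "frechet_derivative \<phi> _ _"])
  qed
  show ?thesis
    unfolding Lval tendsto_iff dist_real_def eventually_at_right[OF zero_less_one]
  proof (intro allI impI)
    fix \<epsilon> :: real assume \<epsilon>: "\<epsilon> > 0"
    obtain d where d: "d > 0" "\<And>y. norm (y - u) < d \<Longrightarrow> norm (\<psi> y - \<psi> u - L' (y - u)) \<le> (\<epsilon>/4) * norm (y - u)"
      using \<psi>d[unfolded has_derivative_at_alt] \<epsilon> by (meson divide_pos_pos zero_less_numeral)
    define T where "T = min 1 (min (d/3) (r/3))"
    have T: "T > 0" "T \<le> 1" using d r by (auto simp: T_def)
    show "\<exists>B>0. \<forall>t>0. t < B \<longrightarrow> \<bar>(\<phi> (u + t *\<^sub>R axis i 1 + t *\<^sub>R axis j 1) - \<phi> (u + t *\<^sub>R axis i 1)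
                 - \<phi> (u + t *\<^sub>R axis j 1) + \<phi> u) / t^2 - L' b\<bar> < \<epsilon>"
    proof (intro exI[of _ T] conjI allI impI)
      fix t :: real assume t: "t > 0" "t < T"
      have tr: "3 * t < r" and td: "3 * t < d" using t by (auto simp: T_def)
      define g where "g s = \<phi> (u + t *\<^sub>R b + s *\<^sub>R a) - \<phi> (u + s *\<^sub>R a)" for s
      have inU: "u + c *\<^sub>R b + s *\<^sub>R a \<in> U" if "0 \<le> s" "s \<le> t" "0 \<le> c" "c \<le> t" for s c
      proof -
        have "norm (c *\<^sub>R b + s *\<^sub>R a) \<le> c + s"
          using norm_triangle_ineq[of "c *\<^sub>R b" "s *\<^sub>R a"] na nb that by simp
        then have "dist u (u + c *\<^sub>R b + s *\<^sub>R a) < r" using that tr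
          by (simp add: dist_norm add.assoc norm_minus_commute[of "c *\<^sub>R b + s *\<^sub>R a" 0, simplified])
        then show ?thesis using r by auto
      qed
      have gder: "(g has_real_derivative (\<psi> (u + t *\<^sub>R b + s *\<^sub>R a) - \<psi> (u + s *\<^sub>R a))) (at s)"
        if "0 \<le> s" "s \<le> t" for s
      proof -
        have m1: "u + t *\<^sub>R b + s *\<^sub>R a \<in> U" using inU[OF that less_imp_le[OF t(1)] order.refl] .
        have m2: "u + s *\<^sub>R a \<in> U" using inU[OF that order.refl less_imp_le[OF t(1)]] by simp
        show ?thesis unfolding g_def
          using DERIV_diff[OF dirder[OF m1] dirder[OF m2]] .
      qed
      have "continuous_on {0..t} g"
        using gder by (meson DERIV_continuous atLeastAtMost_iff continuous_at_imp_continuous_on)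
      moreover have "\<And>x. 0 < x \<Longrightarrow> x < t \<Longrightarrow> g differentiable (at x)"
        using gder real_differentiable_def by (meson less_imp_le)
      ultimately obtain l z where z: "0 < z" "z < t" "(g has_real_derivative l) (at z)" "g t - g 0 = (t - 0) * l"
        using MVT[OF t(1)] by blast
      have l: "l = \<psi> (u + t *\<^sub>R b + z *\<^sub>R a) - \<psi> (u + z *\<^sub>R a)"
        using DERIV_unique[OF z(3) gder] z by auto
      have Delta: "\<phi> (u + t *\<^sub>R axis i 1 + t *\<^sub>R axis j 1) - \<phi> (u + t *\<^sub>R axis i 1)
                 - \<phi> (u + t *\<^sub>R axis j 1) + \<phi> u = t * l"
        using z(4) unfolding g_def a_def b_def by (simp add: algebra_simps)
      define y1 where "y1 = u + t *\<^sub>R b + z *\<^sub>R a"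
      define y2 where "y2 = u + z *\<^sub>R a"
      have n1: "norm (y1 - u) \<le> 2 * t"
        using norm_triangle_ineq[of "t *\<^sub>R b" "z *\<^sub>R a"] na nb z t by (simp add: y1_def)
      have n2: "norm (y2 - u) \<le> t" using na z by (simp add: y2_def)
      have e1: "norm (\<psi> y1 - \<psi> u - L' (y1 - u)) \<le> (\<epsilon>/4) * (2*t)"
      proof -
        have "norm (y1 - u) < d" using n1 td t by linarith
        then have "norm (\<psi> y1 - \<psi> u - L' (y1 - u)) \<le> (\<epsilon>/4) * norm (y1 - u)" by (rule d(2))
        also have "\<dots> \<le> (\<epsilon>/4) * (2*t)" using n1 \<epsilon> by (intro mult_left_mono) auto
        finally show ?thesis .
      qed
      have e2: "norm (\<psi> y2 - \<psi> u - L' (y2 - u)) \<le> (\<epsilon>/4) * t"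
      proof -
        have "norm (y2 - u) < d" using n2 td t by linarith
        then have "norm (\<psi> y2 - \<psi> u - L' (y2 - u)) \<le> (\<epsilon>/4) * norm (y2 - u)" by (rule d(2))
        also have "\<dots> \<le> (\<epsilon>/4) * t" using n2 \<epsilon> by (intro mult_left_mono) auto
        finally show ?thesis .
      qed
      have "L' (y1 - u) - L' (y2 - u) = t * L' b"
        unfolding y1_def y2_def using L'lin by (simp add: linear_add linear_cmul algebra_simps)
      then have "l - t * L' b = (\<psi> y1 - \<psi> u - L' (y1 - u)) - (\<psi> y2 - \<psi> u - L' (y2 - u))"
        unfolding l y1_def y2_def by (simp add: algebra_simps)
      then have "\<bar>l - t * L' b\<bar> \<le> (\<epsilon>/4) * (2*t) + (\<epsilon>/4) * t"
        using e1 e2 abs_triangle_ineq4[of "\<psi> y1 - \<psi> u - L' (y1 - u)" "\<psi> y2 - \<psi> u - L' (y2 - u)"]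
        by (simp only: real_norm_def)
      also have "\<dots> < \<epsilon> * t" using \<epsilon> t by simp
      finally have *: "\<bar>l - t * L' b\<bar> < \<epsilon> * t" .
      have "(t * l) / t^2 - L' b = (l - t * L' b) / t" using t by (simp add: field_simps power2_eq_square)
      then show "\<bar>(\<phi> (u + t *\<^sub>R axis i 1 + t *\<^sub>R axis j 1) - \<phi> (u + t *\<^sub>R axis i 1)
                 - \<phi> (u + t *\<^sub>R axis j 1) + \<phi> u) / t^2 - L' b\<bar> < \<epsilon>"
        unfolding Delta using * t by (simp add: abs_divide pos_divide_less_eq mult.commute)
    qed (rule T(1))
  qed
qed

lemma schwarz_real:
  fixes \<phi> :: "real^'n::finite \<Rightarrow> real"
  assumes U: "open U" "u \<in> U" and d1: "\<And>v. v \<in> U \<Longrightarrow> \<phi> differentiable (at v)"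
    and d2: "\<And>v k. v \<in> U \<Longrightarrow> pd k \<phi> differentiable (at v)"
  shows "pd i (pd j \<phi>) u = pd j (pd i \<phi>) u"
proof -
  have A: "((\<lambda>t. (\<phi> (u + t *\<^sub>R axis i 1 + t *\<^sub>R axis j 1) - \<phi> (u + t *\<^sub>R axis i 1)
                 - \<phi> (u + t *\<^sub>R axis j 1) + \<phi> u) / t^2) \<longlongrightarrow> pd j (pd i \<phi>) u) (at_right 0)"
    using schwarz_limit[OF U d1 d2] by blast
  have B: "((\<lambda>t. (\<phi> (u + t *\<^sub>R axis i 1 + t *\<^sub>R axis j 1) - \<phi> (u + t *\<^sub>R axis i 1)
                 - \<phi> (u + t *\<^sub>R axis j 1) + \<phi> u) / t^2) \<longlongrightarrow> pd i (pd j \<phi>) u) (at_right 0)"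
    using schwarz_limit[OF U d1 d2, of j i] by (simp add: add.commute add.left_commute algebra_simps)
  show ?thesis using tendsto_unique[OF _ B A] by simp
qed



lemma pd_inner_const:
  assumes "G differentiable (at v)"
  shows "pd i (\<lambda>w. inner (G w) c) v = inner (pd i G v) c"
  using pd_inner[OF assms, of "\<lambda>_. c"] by (simp add: pd_const)

lemma schwarz_vec:
  fixes G :: "real^'n::finite \<Rightarrow> 'b::euclidean_space"
  assumes U: "open U" "u \<in> U" and d1: "\<And>v. v \<in> U \<Longrightarrow> G differentiable (at v)"
    and d2: "\<And>v k. v \<in> U \<Longrightarrow> pd k G differentiable (at v)"
  shows "pd i (pd j G) u = pd j (pd i G) u"
proof -
  have comp: "inner (pd i (pd j G) u) c = inner (pd j (pd i G) u) c" for c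
  proof -
    define \<phi> where "\<phi> w = inner (G w) c" for w
    have pk: "pd k \<phi> w = inner (pd k G w) c" if "w \<in> U" for k w
      unfolding \<phi>_def using pd_inner_const[OF d1[OF that]] .
    have d1': "\<And>v. v \<in> U \<Longrightarrow> \<phi> differentiable (at v)"
      unfolding \<phi>_def using d1 by (auto intro: differentiable_inner)
    have d2': "pd k \<phi> differentiable (at v)" if "v \<in> U" for v k
      using diff_local[OF U(1) that, of "\<lambda>w. inner (pd k G w) c" "pd k \<phi>"] pk d2[OF that, of k]
      by (auto intro: differentiable_inner)
    have e: "pd a (pd b \<phi>) u = inner (pd a (pd b G) u) c" for a b
    proof -
      have "pd a (pd b \<phi>) u = pd a (\<lambda>w. inner (pd b G w) c) u"
        using pd_local[OF U(1) U(2), of "pd b \<phi>" "\<lambda>w. inner (pd b G w) c"] pk by auto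
      also have "\<dots> = inner (pd a (pd b G) u) c" using pd_inner_const[OF d2[OF U(2)]] .
      finally show ?thesis .
    qed
    show ?thesis using schwarz_real[OF U d1' d2', of i j] e by simp
  qed
  have "inner (pd i (pd j G) u - pd j (pd i G) u) (pd i (pd j G) u - pd j (pd i G) u) = 0"
    using comp[of "pd i (pd j G) u - pd j (pd i G) u"] by (simp only: inner_diff_left)
  then show ?thesis by simp
qed

lemma smooth_diff:
  "smooth_on U G \<Longrightarrow> v \<in> U \<Longrightarrow> iter_pd ks G differentiable (at v)"
  unfolding smooth_on_def by blast

lemma smooth_diff0: "smooth_on U G \<Longrightarrow> v \<in> U \<Longrightarrow> G differentiable (at v)"
  using smooth_diff[of U G v "[]"] by simp
lemma smooth_diff1: "smooth_on U G \<Longrightarrow> v \<in> U \<Longrightarrow> pd i G differentiable (at v)"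
  using smooth_diff[of U G v "[i]"] by simp
lemma smooth_diff2: "smooth_on U G \<Longrightarrow> v \<in> U \<Longrightarrow> pd i (pd j G) differentiable (at v)"
  using smooth_diff[of U G v "[i,j]"] by simp

lemma sym2:
  fixes G :: "real^'n::finite \<Rightarrow> 'b::euclidean_space"
  assumes "open U" "smooth_on U G" "u \<in> U"
  shows "pd i (pd j G) u = pd j (pd i G) u"
  using schwarz_vec[OF assms(1,3)] smooth_diff0[OF assms(2)] smooth_diff1[OF assms(2)] by blast

lemma sym3:
  fixes G :: "real^'n::finite \<Rightarrow> 'b::euclidean_space"
  assumes U: "open U" "smooth_on U G" "u \<in> U"
  shows "pd i (pd j (pd m G)) u = pd m (pd i (pd j G)) u"
proof -
  have "pd i (pd j (pd m G)) u = pd i (pd m (pd j G)) u"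
    using pd_local[OF U(1) U(3), of "pd j (pd m G)" "pd m (pd j G)"] sym2[OF U(1,2)] by blast
  also have "\<dots> = pd m (pd i (pd j G)) u"
    using schwarz_vec[OF U(1,3), of "pd j G"] smooth_diff1[OF U(2)] smooth_diff2[OF U(2)] by blast
  finally show ?thesis .
qed

lemma differentiable_prod':
  fixes g :: "'i \<Rightarrow> 'a::real_normed_vector \<Rightarrow> 'b::real_normed_field"
  assumes "\<And>i. i \<in> I \<Longrightarrow> g i differentiable (at x)"
  shows "(\<lambda>x. \<Prod>i\<in>I. g i x) differentiable (at x)"
proof -
  from assms obtain D where "\<And>i. i \<in> I \<Longrightarrow> (g i has_derivative D i) (at x)"
    unfolding differentiable_def by metis
  then show ?thesis unfolding differentiable_def by (blast intro: has_derivative_prod)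
qed

lemma det_differentiable:
  fixes M :: "'a::real_normed_vector \<Rightarrow> real^'n::finite^'n"
  assumes "\<And>a b. (\<lambda>v. M v $ a $ b) differentiable (at x)"
  shows "(\<lambda>v. det (M v)) differentiable (at x)"
  unfolding det_def
  by (intro differentiable_sum differentiable_mult differentiable_prod' assms ballI differentiable_const finite_Collect_subsets) auto

lemma matrix_inv_props:
  fixes A :: "'a::field^'n::finite^'n"
  assumes "invertible A"
  shows "A ** matrix_inv A = mat 1" "matrix_inv A ** A = mat 1"
proof -
  have "\<exists>A'. A ** A' = mat 1 \<and> A' ** A = mat 1" using assms unfolding invertible_def .
  from someI_ex[OF this] show "A ** matrix_inv A = mat 1" "matrix_inv A ** A = mat 1"
    unfolding matrix_inv_def by auto
qed

lemma matrix_inv_cramer: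
  fixes A :: "real^'n::finite^'n"
  assumes d: "det A \<noteq> 0"
  shows "matrix_inv A $ i $ j = det (\<chi> a b. if b = i then (if a = j then 1 else 0) else A$a$b) / det A"
proof -
  have inv: "invertible A" using d invertible_det_nz by blast
  define x where "x = matrix_inv A *v axis j 1"
  have "A *v x = axis j 1" unfolding x_def
    by (simp add: matrix_vector_mul_assoc matrix_inv_props(1)[OF inv])
  then have "x = (\<chi> k. det(\<chi> a b. if b=k then (axis j 1 :: real^'n)$a else A$a$b) / det A)"
    using cramer[OF d] by blast
  then have "x $ i = det(\<chi> a b. if b=i then (axis j 1 :: real^'n)$a else A$a$b) / det A" by simp
  moreover have "x $ i = matrix_inv A $ i $ j"
    unfolding x_def by (simp add: matrix_vector_mult_def axis_def if_distrib cong: if_cong)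
  moreover have "(\<chi> a b. if b=i then (axis j 1 :: real^'n)$a else A$a$b) = (\<chi> a b. if b = i then (if a = j then 1 else 0) else A$a$b)"
    by (simp add: axis_def vec_eq_iff)
  ultimately show ?thesis by simp
qed



locale LS =
  fixes U :: "(real^'n::finite) set" and F :: "real^'n \<Rightarrow> complex^'n" and f :: "real^'n \<Rightarrow> real"
  assumes U: "open U" and sF: "smooth_on U F" and imm: "immersion_on U F"
    and lag: "lagrangian_on U F" and ss: "self_shrinker_on U F" and sf: "smooth_on U f"
begin

lemma dF0: "v \<in> U \<Longrightarrow> F differentiable (at v)" using smooth_diff0[OF sF] .
lemma dF1: "v \<in> U \<Longrightarrow> pd i F differentiable (at v)" using smooth_diff1[OF sF] .
lemma dF2: "v \<in> U \<Longrightarrow> pd i (pd j F) differentiable (at v)" using smooth_diff2[OF sF] .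
lemma df0: "v \<in> U \<Longrightarrow> f differentiable (at v)" using smooth_diff0[OF sf] .
lemma df1: "v \<in> U \<Longrightarrow> pd i f differentiable (at v)" using smooth_diff1[OF sf] .
lemma df2: "v \<in> U \<Longrightarrow> pd i (pd j f) differentiable (at v)" using smooth_diff2[OF sf] .

lemma DF:
  assumes "v \<in> U"
  shows "frechet_derivative F (at v) h = (\<Sum>i\<in>UNIV. h$i *\<^sub>R pd i F v)"
proof -
  have lin: "linear (frechet_derivative F (at v))" using dF0[OF assms] by (rule linear_frechet_derivative)
  have "h = (\<Sum>i\<in>UNIV. h$i *\<^sub>R axis i (1::real))"
    using basis_expansion[of h] by (simp add: scalar_mult_eq_scaleR)
  then have "frechet_derivative F (at v) h = frechet_derivative F (at v) (\<Sum>i\<in>UNIV. h$i *\<^sub>R axis i (1::real))"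
    by simp
  also have "\<dots> = (\<Sum>i\<in>UNIV. h$i *\<^sub>R frechet_derivative F (at v) (axis i 1))"
    using lin by (simp add: linear_sum linear_scale)
  finally show ?thesis by (simp add: pd_def)
qed

lemma indep:
  assumes "v \<in> U" "(\<Sum>i\<in>UNIV. c$i *\<^sub>R pd i F v) = 0"
  shows "c = 0"
proof -
  have lin: "linear (frechet_derivative F (at v))" using dF0[OF assms(1)] by (rule linear_frechet_derivative)
  have "frechet_derivative F (at v) c = frechet_derivative F (at v) 0"
    using DF[OF assms(1)] assms(2) lin by (simp add: linear_0)
  then show ?thesis using imm assms(1) unfolding immersion_on_def inj_def by blast
qed

lemma gmat_entry: "gmat F v $ i $ j = inner (pd i F v) (pd j F v)"
  by (simp add: gmat_def)

lemma gmat_invertible: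
  assumes v: "v \<in> U"
  shows "invertible (gmat F v)"
proof -
  have ker: "c = 0" if "gmat F v *v c = 0" for c
  proof -
    define w where "w = (\<Sum>i\<in>UNIV. c$i *\<^sub>R pd i F v)"
    have "inner w w = (\<Sum>i\<in>UNIV. c$i * inner (pd i F v) w)"
      unfolding w_def[of] by (simp add: inner_sum_left)
    also have "\<dots> = (\<Sum>i\<in>UNIV. c$i * (gmat F v *v c)$i)"
    proof (rule sum.cong[OF refl])
      fix i
      have "inner (pd i F v) w = (\<Sum>j\<in>UNIV. c$j * inner (pd i F v) (pd j F v))"
        unfolding w_def by (simp add: inner_sum_right)
      also have "\<dots> = (gmat F v *v c)$i"
        by (simp add: matrix_vector_mult_def gmat_entry mult.commute)
      finally show "c$i * inner (pd i F v) w = c$i * (gmat F v *v c)$i" by simp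
    qed
    also have "\<dots> = 0" using that by simp
    finally have "w = 0" by simp
    then show ?thesis using indep[OF v] unfolding w_def by blast
  qed
  then obtain B where "B ** gmat F v = mat 1" using matrix_left_invertible_ker by blast
  then show ?thesis unfolding invertible_def using matrix_left_right_inverse by blast
qed

lemma det_gmat: "v \<in> U \<Longrightarrow> det (gmat F v) \<noteq> 0"
  using gmat_invertible invertible_det_nz by blast

lemma gi_g: "v \<in> U \<Longrightarrow> (\<Sum>b\<in>UNIV. ginv F v a b * inner (pd b F v) (pd c F v)) = (if a = c then 1 else 0)"
  using arg_cong[OF matrix_inv_props(2)[OF gmat_invertible], of v "\<lambda>M. M $ a $ c"]
  by (simp add: matrix_matrix_mult_def ginv_def gmat_entry mat_def)

lemma g_gi: "v \<in> U \<Longrightarrow> (\<Sum>b\<in>UNIV. inner (pd a F v) (pd b F v) * ginv F v b c) = (if a = c then 1 else 0)"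
  using arg_cong[OF matrix_inv_props(1)[OF gmat_invertible], of v "\<lambda>M. M $ a $ c"]
  by (simp add: matrix_matrix_mult_def ginv_def gmat_entry mat_def)

lemma gi_sym:
  assumes v: "v \<in> U"
  shows "ginv F v a b = ginv F v b a"
proof -
  let ?g = "gmat F v" let ?h = "matrix_inv (gmat F v)"
  have gs: "transpose ?g = ?g" by (simp add: transpose_def gmat_def vec_eq_iff inner_commute)
  have 1: "?g ** ?h = mat 1" and 2: "?h ** ?g = mat 1"
    using matrix_inv_props[OF gmat_invertible[OF v]] by auto
  have "transpose (?g ** ?h) = transpose (mat 1 :: real^'n^'n)" using 1 by (rule arg_cong)
  then have 3: "transpose ?h ** ?g = mat 1"
    by (simp only: matrix_transpose_mul gs transpose_mat)
  have "transpose ?h = transpose ?h ** (?g ** ?h)" by (simp only: 1 matrix_mul_rid)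
  also have "\<dots> = (transpose ?h ** ?g) ** ?h" by (simp only: matrix_mul_assoc)
  also have "\<dots> = ?h" by (simp only: 3 matrix_mul_lid)
  finally have "transpose ?h = ?h" .
  moreover have "?h $ a $ b = transpose ?h $ b $ a" by (simp add: transpose_def)
  ultimately show ?thesis unfolding ginv_def by simp
qed

lemma gmat_diff: "v \<in> U \<Longrightarrow> (\<lambda>w. gmat F w $ a $ b) differentiable (at v)"
  by (simp add: gmat_entry dF1 differentiable_inner)

lemma gi_diff:
  assumes v: "v \<in> U"
  shows "(\<lambda>w. ginv F w a b) differentiable (at v)"
proof -
  define N where "N w = det (\<chi> p q. if q = a then (if p = b then 1 else 0) else gmat F w $ p $ q) / det (gmat F w)" for w
  have ifd: "(\<lambda>x. if P then c else h x) differentiable (at v)" if "h differentiable (at v)" for P c h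
    using that by (cases P) auto
  have e: "(\<lambda>w. (\<chi> p q. if q = a then (if p = b then 1 else 0) else gmat F w $ p $ q) $ p $ q) differentiable (at v)" for p q
    using ifd[OF gmat_diff[OF v]] by simp
  have nd: "N differentiable (at v)" unfolding N_def
    by (rule differentiable_divide[OF det_differentiable[OF e] det_differentiable[OF gmat_diff[OF v]] det_gmat[OF v]])
  have eq: "N w = ginv F w a b" if w: "w \<in> U" for w
    unfolding N_def ginv_def by (rule matrix_inv_cramer[OF det_gmat[OF w], symmetric])
  show ?thesis using diff_local[OF U v eq nd] by simp
qed

end


lemma alg_identity:
  fixes gi :: "'n::finite \<Rightarrow> 'n \<Rightarrow> real" and \<Gamma> hh :: "'n \<Rightarrow> 'n \<Rightarrow> 'n \<Rightarrow> real"
    and H B ffz ccz :: "'n \<Rightarrow> 'n \<Rightarrow> real" and xe :: "'n \<Rightarrow> real" and fm :: real and m :: 'n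
  assumes gs: "\<And>i j. gi i j = gi j i" and \<Gamma>s: "\<And>i j l. \<Gamma> i j l = \<Gamma> j i l" and Hs: "\<And>i j. H i j = H j i"
    and hs1: "\<And>i j l. hh i j l = hh j i l" and hs2: "\<And>i j l. hh i j l = hh i l j"
  shows
  "(\<Sum>i\<in>UNIV. \<Sum>j\<in>UNIV. gi i j * ((ffz i j - ((\<Sum>k\<in>UNIV. \<Sum>l\<in>UNIV. gi k l * \<Gamma> j m l * H i k)
       + (\<Sum>k\<in>UNIV. \<Sum>l\<in>UNIV. gi k l * hh j m l * B i k)) - ccz i j)
       - (\<Sum>k\<in>UNIV. \<Sum>l\<in>UNIV. gi k l * H j l * \<Gamma> i m k)
       - (\<Sum>k\<in>UNIV. (\<Sum>l\<in>UNIV. gi k l * \<Gamma> i j l) * H k m)))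
   - 1/2 * (\<Sum>k\<in>UNIV. (\<Sum>l\<in>UNIV. gi k l * xe l) * H k m)
   + (\<Sum>i\<in>UNIV. \<Sum>j\<in>UNIV. \<Sum>k\<in>UNIV. \<Sum>l\<in>UNIV. gi i k * gi j l * B i j * hh k l m)
   + 1/2 * fm
  = (\<Sum>i\<in>UNIV. \<Sum>j\<in>UNIV. (- (\<Sum>a\<in>UNIV. \<Sum>b\<in>UNIV. gi i a * (\<Gamma> m a b + \<Gamma> m b a) * gi b j)) * H i j
       + gi i j * (ffz i j - ((\<Sum>k\<in>UNIV. \<Sum>l\<in>UNIV. gi k l * \<Gamma> i j l * H m k)
            + (\<Sum>k\<in>UNIV. \<Sum>l\<in>UNIV. gi k l * hh i j l * B m k)) - ccz i j))
   - 1/2 * (fm + (\<Sum>k\<in>UNIV. \<Sum>l\<in>UNIV. gi k l * xe l * H m k)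
       + (\<Sum>k\<in>UNIV. \<Sum>l\<in>UNIV. gi k l * (-2 * (\<Sum>a\<in>UNIV. \<Sum>b\<in>UNIV. gi a b * hh a b l)) * B m k))
   + fm" (is "?L = ?R")
proof -
  define P1 where "P1 = (\<Sum>i\<in>UNIV. \<Sum>j\<in>UNIV. \<Sum>a\<in>UNIV. \<Sum>b\<in>UNIV. gi i a * \<Gamma> m a b * gi b j * H i j)"
  have Q3a: "(\<Sum>i\<in>UNIV. \<Sum>j\<in>UNIV. gi i j * (\<Sum>k\<in>UNIV. \<Sum>l\<in>UNIV. gi k l * \<Gamma> j m l * H i k)) = P1"
  proof -
    have "P1 = (\<Sum>i\<in>UNIV. \<Sum>a\<in>UNIV. \<Sum>j\<in>UNIV. \<Sum>b\<in>UNIV. gi i a * \<Gamma> m a b * gi b j * H i j)"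
      unfolding P1_def by (rule sum.cong[OF refl], rule sum.swap)
    also have "\<dots> = (\<Sum>i\<in>UNIV. \<Sum>j\<in>UNIV. gi i j * (\<Sum>k\<in>UNIV. \<Sum>l\<in>UNIV. gi k l * \<Gamma> j m l * H i k))"
      by (simp add: sum_distrib_left \<Gamma>s[of m] gs[of _ j for j] ac_simps)
    finally show ?thesis by simp
  qed
  have Q3b: "(\<Sum>i\<in>UNIV. \<Sum>j\<in>UNIV. gi i j * (\<Sum>k\<in>UNIV. \<Sum>l\<in>UNIV. gi k l * H j l * \<Gamma> i m k)) = P1"
  proof -
    have "(\<Sum>i\<in>UNIV. \<Sum>j\<in>UNIV. gi i j * (\<Sum>k\<in>UNIV. \<Sum>l\<in>UNIV. gi k l * H j l * \<Gamma> i m k))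
       = (\<Sum>j\<in>UNIV. \<Sum>i\<in>UNIV. gi i j * (\<Sum>k\<in>UNIV. \<Sum>l\<in>UNIV. gi k l * H j l * \<Gamma> i m k))"
      by (rule sum.swap)
    also have "\<dots> = (\<Sum>j\<in>UNIV. \<Sum>i\<in>UNIV. \<Sum>k\<in>UNIV. \<Sum>l\<in>UNIV. gi i j * (gi k l * H j l * \<Gamma> i m k))"
      by (simp add: sum_distrib_left)
    also have "\<dots> = (\<Sum>j\<in>UNIV. \<Sum>i\<in>UNIV. \<Sum>l\<in>UNIV. \<Sum>k\<in>UNIV. gi i j * (gi k l * H j l * \<Gamma> i m k))"
      by (rule sum.cong[OF refl], rule sum.cong[OF refl], rule sum.swap)
    also have "\<dots> = (\<Sum>j\<in>UNIV. \<Sum>l\<in>UNIV. \<Sum>i\<in>UNIV. \<Sum>k\<in>UNIV. gi i j * (gi k l * H j l * \<Gamma> i m k))"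
      by (rule sum.cong[OF refl], rule sum.swap)
    also have "\<dots> = P1"
      unfolding P1_def by (simp add: \<Gamma>s[of _ m] gs ac_simps)
    finally show ?thesis .
  qed
  define P2 where "P2 = (\<Sum>i\<in>UNIV. \<Sum>j\<in>UNIV. \<Sum>a\<in>UNIV. \<Sum>b\<in>UNIV. gi i a * \<Gamma> m b a * gi b j * H i j)"
  have P21: "P2 = P1"
  proof -
    have "P2 = (\<Sum>j\<in>UNIV. \<Sum>i\<in>UNIV. \<Sum>a\<in>UNIV. \<Sum>b\<in>UNIV. gi i a * \<Gamma> m b a * gi b j * H i j)"
      unfolding P2_def by (rule sum.swap)
    moreover have "P1 = (\<Sum>i\<in>UNIV. \<Sum>j\<in>UNIV. \<Sum>b\<in>UNIV. \<Sum>a\<in>UNIV. gi i a * \<Gamma> m a b * gi b j * H i j)"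
      unfolding P1_def by (rule sum.cong[OF refl], rule sum.cong[OF refl], rule sum.swap)
    ultimately show ?thesis by (simp add: gs Hs ac_simps)
  qed
  have Q3c: "(\<Sum>i\<in>UNIV. \<Sum>j\<in>UNIV. (- (\<Sum>a\<in>UNIV. \<Sum>b\<in>UNIV. gi i a * (\<Gamma> m a b + \<Gamma> m b a) * gi b j)) * H i j) = - 2 * P1"
  proof -
    have "(\<Sum>i\<in>UNIV. \<Sum>j\<in>UNIV. (- (\<Sum>a\<in>UNIV. \<Sum>b\<in>UNIV. gi i a * (\<Gamma> m a b + \<Gamma> m b a) * gi b j)) * H i j) = - (P1 + P2)"
      unfolding P1_def P2_def
      by (simp add: sum_distrib_right distrib_left distrib_right sum.distrib sum_negf left_diff_distrib sum_subtractf)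
    then show ?thesis using P21 by simp
  qed
  have Q3d: "(\<Sum>i\<in>UNIV. \<Sum>j\<in>UNIV. gi i j * (\<Sum>k\<in>UNIV. (\<Sum>l\<in>UNIV. gi k l * \<Gamma> i j l) * H k m))
     = (\<Sum>i\<in>UNIV. \<Sum>j\<in>UNIV. gi i j * (\<Sum>k\<in>UNIV. \<Sum>l\<in>UNIV. gi k l * \<Gamma> i j l * H m k))"
    by (simp add: sum_distrib_right Hs[of _ m])
  have Q4a: "(\<Sum>i\<in>UNIV. \<Sum>j\<in>UNIV. gi i j * (\<Sum>k\<in>UNIV. \<Sum>l\<in>UNIV. gi k l * hh j m l * B i k))
     = (\<Sum>i\<in>UNIV. \<Sum>j\<in>UNIV. \<Sum>k\<in>UNIV. \<Sum>l\<in>UNIV. gi i k * gi j l * B i j * hh k l m)"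
  proof -
    have "(\<Sum>i\<in>UNIV. \<Sum>j\<in>UNIV. \<Sum>k\<in>UNIV. \<Sum>l\<in>UNIV. gi i k * gi j l * B i j * hh k l m)
      = (\<Sum>i\<in>UNIV. \<Sum>k\<in>UNIV. \<Sum>j\<in>UNIV. \<Sum>l\<in>UNIV. gi i k * gi j l * B i j * hh k l m)"
      by (rule sum.cong[OF refl], rule sum.swap)
    then show ?thesis by (simp add: sum_distrib_left hs2[of _ m] ac_simps)
  qed
  have Q4b: "(\<Sum>k\<in>UNIV. \<Sum>l\<in>UNIV. gi k l * (-2 * (\<Sum>a\<in>UNIV. \<Sum>b\<in>UNIV. gi a b * hh a b l)) * B m k)
     = -2 * (\<Sum>i\<in>UNIV. \<Sum>j\<in>UNIV. gi i j * (\<Sum>k\<in>UNIV. \<Sum>l\<in>UNIV. gi k l * hh i j l * B m k))"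
  proof -
    have "(\<Sum>k\<in>UNIV. \<Sum>l\<in>UNIV. gi k l * (-2 * (\<Sum>a\<in>UNIV. \<Sum>b\<in>UNIV. gi a b * hh a b l)) * B m k)
      = -2 * (\<Sum>k\<in>UNIV. \<Sum>l\<in>UNIV. \<Sum>a\<in>UNIV. \<Sum>b\<in>UNIV. gi a b * gi k l * hh a b l * B m k)"
      by (simp add: sum_distrib_left sum_distrib_right ac_simps)
    also have "(\<Sum>k\<in>UNIV. \<Sum>l\<in>UNIV. \<Sum>a\<in>UNIV. \<Sum>b\<in>UNIV. gi a b * gi k l * hh a b l * B m k)
      = (\<Sum>k\<in>UNIV. \<Sum>a\<in>UNIV. \<Sum>l\<in>UNIV. \<Sum>b\<in>UNIV. gi a b * gi k l * hh a b l * B m k)"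
      by (rule sum.cong[OF refl], rule sum.swap)
    also have "\<dots> = (\<Sum>k\<in>UNIV. \<Sum>a\<in>UNIV. \<Sum>b\<in>UNIV. \<Sum>l\<in>UNIV. gi a b * gi k l * hh a b l * B m k)"
      by (rule sum.cong[OF refl], rule sum.cong[OF refl], rule sum.swap)
    also have "\<dots> = (\<Sum>a\<in>UNIV. \<Sum>k\<in>UNIV. \<Sum>b\<in>UNIV. \<Sum>l\<in>UNIV. gi a b * gi k l * hh a b l * B m k)"
      by (rule sum.swap)
    also have "\<dots> = (\<Sum>a\<in>UNIV. \<Sum>b\<in>UNIV. \<Sum>k\<in>UNIV. \<Sum>l\<in>UNIV. gi a b * gi k l * hh a b l * B m k)"
      by (rule sum.cong[OF refl], rule sum.swap)
    also have "\<dots> = (\<Sum>i\<in>UNIV. \<Sum>j\<in>UNIV. gi i j * (\<Sum>k\<in>UNIV. \<Sum>l\<in>UNIV. gi k l * hh i j l * B m k))"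
      by (simp add: sum_distrib_left ac_simps)
    finally show ?thesis .
  qed
  have Q5: "(\<Sum>k\<in>UNIV. (\<Sum>l\<in>UNIV. gi k l * xe l) * H k m) = (\<Sum>k\<in>UNIV. \<Sum>l\<in>UNIV. gi k l * xe l * H m k)"
    by (simp add: sum_distrib_right Hs[of _ m])
  define A1 where "A1 = (\<Sum>i\<in>UNIV. \<Sum>j\<in>UNIV. gi i j * ffz i j)"
  define A2 where "A2 = (\<Sum>i\<in>UNIV. \<Sum>j\<in>UNIV. gi i j * ccz i j)"
  define X2 where "X2 = (\<Sum>i\<in>UNIV. \<Sum>j\<in>UNIV. gi i j * (\<Sum>k\<in>UNIV. \<Sum>l\<in>UNIV. gi k l * hh j m l * B i k))"
  define X4 where "X4 = (\<Sum>i\<in>UNIV. \<Sum>j\<in>UNIV. gi i j * (\<Sum>k\<in>UNIV. \<Sum>l\<in>UNIV. gi k l * \<Gamma> i j l * H m k))"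
  define X5 where "X5 = (\<Sum>k\<in>UNIV. \<Sum>l\<in>UNIV. gi k l * xe l * H m k)"
  define Y3 where "Y3 = (\<Sum>i\<in>UNIV. \<Sum>j\<in>UNIV. gi i j * (\<Sum>k\<in>UNIV. \<Sum>l\<in>UNIV. gi k l * hh i j l * B m k))"
  have L: "?L = A1 - (\<Sum>i\<in>UNIV. \<Sum>j\<in>UNIV. gi i j * (\<Sum>k\<in>UNIV. \<Sum>l\<in>UNIV. gi k l * \<Gamma> j m l * H i k))
      - X2 - A2 - (\<Sum>i\<in>UNIV. \<Sum>j\<in>UNIV. gi i j * (\<Sum>k\<in>UNIV. \<Sum>l\<in>UNIV. gi k l * H j l * \<Gamma> i m k))
      - (\<Sum>i\<in>UNIV. \<Sum>j\<in>UNIV. gi i j * (\<Sum>k\<in>UNIV. (\<Sum>l\<in>UNIV. gi k l * \<Gamma> i j l) * H k m))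
      - 1/2 * (\<Sum>k\<in>UNIV. (\<Sum>l\<in>UNIV. gi k l * xe l) * H k m)
      + (\<Sum>i\<in>UNIV. \<Sum>j\<in>UNIV. \<Sum>k\<in>UNIV. \<Sum>l\<in>UNIV. gi i k * gi j l * B i j * hh k l m) + 1/2 * fm"
    unfolding A1_def A2_def X2_def
    by (simp add: sum.distrib sum_subtractf right_diff_distrib distrib_left)
  have R: "?R = (\<Sum>i\<in>UNIV. \<Sum>j\<in>UNIV. (- (\<Sum>a\<in>UNIV. \<Sum>b\<in>UNIV. gi i a * (\<Gamma> m a b + \<Gamma> m b a) * gi b j)) * H i j)
      + A1 - X4 - Y3 - A2 - 1/2 * (fm + X5 + (\<Sum>k\<in>UNIV. \<Sum>l\<in>UNIV. gi k l * (-2 * (\<Sum>a\<in>UNIV. \<Sum>b\<in>UNIV. gi a b * hh a b l)) * B m k)) + fm"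
    unfolding A1_def A2_def X4_def Y3_def X5_def
    by (simp add: sum.distrib sum_subtractf right_diff_distrib distrib_left sum_negf)
  have L2: "?L = A1 - P1 - X2 - A2 - P1 - X4 - 1/2 * X5 + X2 + 1/2 * fm"
    unfolding L by (simp only: Q3a Q3b Q3d Q4a[symmetric] Q5 X4_def[symmetric] X5_def[symmetric] X2_def[symmetric])
  have R2: "?R = - 2 * P1 + A1 - X4 - Y3 - A2 - 1/2 * (fm + X5 + (-2 * Y3)) + fm"
    unfolding R by (simp only: Q3c Q4b Y3_def[symmetric])
  show ?thesis unfolding L2 R2 by (simp add: field_simps)
qed



definition nrep :: "(real^'n::finite \<Rightarrow> complex^'n) \<Rightarrow> real^'n \<Rightarrow> complex^'n \<Rightarrow> complex^'n" where
  "nrep F v X = (\<Sum>k\<in>UNIV. \<Sum>l\<in>UNIV. (ginv F v k l * inner X (Jc (pd l F v))) *\<^sub>R Jc (pd k F v))"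

lemma sum_UNIV_Plus: "(\<Sum>s\<in>(UNIV::('a::finite + 'b::finite) set). g s) = (\<Sum>i\<in>UNIV. g (Inl i)) + (\<Sum>i\<in>UNIV. g (Inr i))"
  using sum.Plus[of "UNIV::'a set" "UNIV::'b set" g] by (simp add: comp_def)

context LS begin

lemma lag0: "v \<in> U \<Longrightarrow> inner (Jc (pd i F v)) (pd j F v) = 0"
  using lag unfolding lagrangian_on_def by blast

lemma lag0': "v \<in> U \<Longrightarrow> inner (pd j F v) (Jc (pd i F v)) = 0"
  using lag0 by (simp add: inner_commute)

lemma contract:
  assumes v: "v \<in> U"
  shows "(\<Sum>i\<in>UNIV. (\<Sum>j\<in>UNIV. ginv F v i j * c j) * inner (pd i F v) (pd p F v)) = c p"
proof -
  have "(\<Sum>i\<in>UNIV. (\<Sum>j\<in>UNIV. ginv F v i j * c j) * inner (pd i F v) (pd p F v))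
      = (\<Sum>j\<in>UNIV. c j * (\<Sum>i\<in>UNIV. ginv F v j i * inner (pd i F v) (pd p F v)))"
    apply (simp add: sum_distrib_left sum_distrib_right)
    apply (subst sum.swap)
    apply (simp add: gi_sym[OF v] ac_simps)
    done
  also have "\<dots> = c p" by (simp add: gi_g[OF v] if_distrib cong: if_cong)
  finally show ?thesis .
qed

lemma zero_from_e:
  assumes v: "v \<in> U" and h: "\<And>p. inner w (pd p F v) = 0" and w: "w = (\<Sum>i\<in>UNIV. a$i *\<^sub>R pd i F v)"
  shows "a = 0"
proof -
  have "inner w w = (\<Sum>i\<in>UNIV. a$i * inner w (pd i F v))"
    by (subst (2) w) (simp add: inner_sum_right)
  then have "w = 0" using h by simp
  then show ?thesis using indep[OF v, of a] w by simp
qed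

lemma Jc_Jc: "Jc (Jc x) = - x" by (simp add: Jc_def vec_eq_iff)

lemma span_all:
  assumes v: "v \<in> U" and he: "\<And>p. inner Y (pd p F v) = 0" and hn: "\<And>p. inner Y (Jc (pd p F v)) = 0"
  shows "Y = 0"
proof -
  define b :: "'n + 'n \<Rightarrow> complex^'n" where "b s = (case s of Inl i \<Rightarrow> pd i F v | Inr i \<Rightarrow> Jc (pd i F v))" for s
  have findep: "c = (\<lambda>_. 0)" if "(\<Sum>s\<in>UNIV. c s *\<^sub>R b s) = 0" for c
  proof -
    define w where "w = (\<Sum>i\<in>UNIV. (\<chi> k. c (Inl k))$i *\<^sub>R pd i F v)"
    define z where "z = (\<Sum>i\<in>UNIV. (\<chi> k. c (Inr k))$i *\<^sub>R pd i F v)"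
    have wz: "w + Jc z = 0" using that unfolding w_def z_def
      by (simp add: sum_UNIV_Plus b_def Jc_sum Jc_scaleR)
    have "inner w (pd p F v) = 0" for p
    proof -
      have "inner (Jc z) (pd p F v) = 0"
        unfolding z_def by (simp add: Jc_sum Jc_scaleR inner_sum_left lag0[OF v])
      then show ?thesis using arg_cong[OF wz, of "\<lambda>x. inner x (pd p F v)"] by (simp add: inner_add_left)
    qed
    then have a0: "(\<chi> k. c (Inl k)) = 0" using zero_from_e[OF v _ w_def] by blast
    then have "w = 0" unfolding w_def by simp
    then have "Jc z = 0" using wz by simp
    then have "z = 0" using Jc_Jc[of z] by simp
    then have b0: "(\<chi> k. c (Inr k)) = 0" using indep[OF v, of "\<chi> k. c (Inr k)"] z_def by simp
    show ?thesis
    proof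
      fix s show "c s = 0" using a0 b0 by (cases s) (auto simp: vec_eq_iff)
    qed
  qed
  have injb: "inj b"
  proof
    fix s t assume st: "b s = b t"
    show "s = t"
    proof (rule ccontr)
      assume ne: "s \<noteq> t"
      define c where "c x = (if x = s then 1 else if x = t then -1 else (0::real))" for x :: "'n + 'n"
      have "(\<Sum>x\<in>UNIV. c x *\<^sub>R b x) = (\<Sum>x\<in>{s,t}. c x *\<^sub>R b x)"
        by (rule sum.mono_neutral_right) (auto simp: c_def)
      also have "\<dots> = 0" using ne st by (simp add: c_def)
      finally have "c = (\<lambda>_. 0)" by (rule findep)
      then have "c s = 0" by simp
      then show False by (simp add: c_def)
    qed
  qed
  have ind: "independent (range b)"
  proof (rule independent_if_scalars_zero)
    show "finite (range b)" by simp
    fix g x assume g: "(\<Sum>x\<in>range b. g x *\<^sub>R x) = 0" and x: "x \<in> range b"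
    have "(\<Sum>s\<in>UNIV. g (b s) *\<^sub>R b s) = 0" using g by (simp add: sum.reindex[OF injb])
    from findep[OF this] x show "g x = 0" by (auto dest: fun_cong)
  qed
  have card: "card (range b) = DIM(complex^'n)"
    using card_image[OF injb] by (simp add: card_Plus)
  have "UNIV \<subseteq> span (range b)"
    using card_ge_dim_independent[OF subset_UNIV ind] card by simp
  then obtain c where c: "Y = (\<Sum>x\<in>range b. c x *\<^sub>R x)"
    using span_finite[of "range b"] by auto
  have orth: "inner Y x = 0" if "x \<in> range b" for x
    using that he hn by (auto simp: b_def split: sum.splits)
  have "inner Y Y = (\<Sum>x\<in>range b. c x * inner Y x)"
    by (subst (2) c) (simp add: inner_sum_right)
  also have "\<dots> = 0" using orth by simp
  finally show ?thesis by simp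
qed

lemma inner_tcomb_e:
  assumes v: "v \<in> U"
  shows "inner (\<Sum>i\<in>UNIV. \<Sum>j\<in>UNIV. (ginv F v i j * c j) *\<^sub>R pd i F v) (pd p F v) = c p"
proof -
  have "inner (\<Sum>i\<in>UNIV. \<Sum>j\<in>UNIV. (ginv F v i j * c j) *\<^sub>R pd i F v) (pd p F v)
     = (\<Sum>i\<in>UNIV. (\<Sum>j\<in>UNIV. ginv F v i j * c j) * inner (pd i F v) (pd p F v))"
    by (simp add: inner_sum_left sum_distrib_right)
  then show ?thesis using contract[OF v] by simp
qed

lemma inner_tcomb_n:
  assumes v: "v \<in> U"
  shows "inner (\<Sum>i\<in>UNIV. \<Sum>j\<in>UNIV. (ginv F v i j * c j) *\<^sub>R pd i F v) (Jc (pd p F v)) = 0"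
  by (simp add: inner_sum_left lag0'[OF v])

lemma inner_ncomb_n:
  assumes v: "v \<in> U"
  shows "inner (\<Sum>i\<in>UNIV. \<Sum>j\<in>UNIV. (ginv F v i j * c j) *\<^sub>R Jc (pd i F v)) (Jc (pd p F v)) = c p"
proof -
  have "inner (\<Sum>i\<in>UNIV. \<Sum>j\<in>UNIV. (ginv F v i j * c j) *\<^sub>R Jc (pd i F v)) (Jc (pd p F v))
     = (\<Sum>i\<in>UNIV. (\<Sum>j\<in>UNIV. ginv F v i j * c j) * inner (pd i F v) (pd p F v))"
    by (simp add: inner_sum_left sum_distrib_right inner_Jc_Jc)
  then show ?thesis using contract[OF v] by simp
qed

lemma inner_ncomb_e:
  assumes v: "v \<in> U"
  shows "inner (\<Sum>i\<in>UNIV. \<Sum>j\<in>UNIV. (ginv F v i j * c j) *\<^sub>R Jc (pd i F v)) (pd p F v) = 0"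
  by (simp add: inner_sum_left lag0[OF v])

lemma decomp:
  assumes v: "v \<in> U"
  shows "X = tproj F v X + nrep F v X"
proof -
  define Y where "Y = X - tproj F v X - nrep F v X"
  have "inner Y (pd p F v) = 0" for p
    unfolding Y_def tproj_def nrep_def
    using inner_tcomb_e[OF v, of "\<lambda>j. inner X (pd j F v)"] inner_ncomb_e[OF v, of "\<lambda>j. inner X (Jc (pd j F v))"]
    by (simp add: inner_diff_left)
  moreover have "inner Y (Jc (pd p F v)) = 0" for p
    unfolding Y_def tproj_def nrep_def
    using inner_tcomb_n[OF v, of "\<lambda>j. inner X (pd j F v)"] inner_ncomb_n[OF v, of "\<lambda>j. inner X (Jc (pd j F v))"]
    by (simp add: inner_diff_left)
  ultimately have "Y = 0" using span_all[OF v] by blast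
  then show ?thesis unfolding Y_def by (simp add: algebra_simps)
qed

lemma nproj_eq: "v \<in> U \<Longrightarrow> nproj F v X = nrep F v X"
  unfolding nproj_def using decomp[of v X] by (simp add: algebra_simps)

lemma inner_nproj_n: "v \<in> U \<Longrightarrow> inner (nproj F v X) (Jc (pd p F v)) = inner X (Jc (pd p F v))"
  unfolding nproj_eq nrep_def using inner_ncomb_n[of v "\<lambda>j. inner X (Jc (pd j F v))"] by simp

lemma inner_nproj_e: "v \<in> U \<Longrightarrow> inner (nproj F v X) (pd p F v) = 0"
  unfolding nproj_eq nrep_def using inner_ncomb_e[of v "\<lambda>j. inner X (Jc (pd j F v))"] by simp

lemma inner_tproj_n: "v \<in> U \<Longrightarrow> inner (tproj F v X) (Jc (pd p F v)) = 0"
  unfolding tproj_def using inner_tcomb_n[of v "\<lambda>j. inner X (pd j F v)"] by simp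

end


definition Hf :: "(real^'n::finite \<Rightarrow> complex^'n) \<Rightarrow> (real^'n \<Rightarrow> real) \<Rightarrow> real^'n \<Rightarrow> 'n \<Rightarrow> 'n \<Rightarrow> real" where
  "Hf F f v j m = pd j (pd m f) v - inner (grad F f v) (pd j (pd m F) v)"

context LS begin

lemma grad_e: "v \<in> U \<Longrightarrow> inner (grad F f v) (pd l F v) = pd l f v"
  unfolding grad_def using inner_tcomb_e[of v "\<lambda>j. pd j f v"] by simp

lemma grad_n: "v \<in> U \<Longrightarrow> inner (grad F f v) (Jc (pd l F v)) = 0"
  unfolding grad_def using inner_tcomb_n[of v "\<lambda>j. pd j f v"] by simp

lemma V_eq: "Jc (grad F f v) = (\<Sum>i\<in>UNIV. \<Sum>j\<in>UNIV. (ginv F v i j * pd j f v) *\<^sub>R Jc (pd i F v))"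
  unfolding grad_def by (simp add: Jc_sum Jc_scaleR)

lemma V_n: "v \<in> U \<Longrightarrow> inner (Jc (grad F f v)) (Jc (pd l F v)) = pd l f v"
  using grad_e by (simp add: inner_Jc_Jc)

lemma V_e: "v \<in> U \<Longrightarrow> inner (Jc (grad F f v)) (pd l F v) = 0"
  unfolding V_eq using inner_ncomb_e[of v "\<lambda>j. pd j f v"] by simp

lemma grad_diff: "v \<in> U \<Longrightarrow> grad F f differentiable (at v)"
  unfolding grad_def
  by (intro differentiable_sum ballI finite differentiable_scaleR' differentiable_mult gi_diff df1 dF1)

lemma V_diff: "v \<in> U \<Longrightarrow> (\<lambda>w. Jc (grad F f w)) differentiable (at v)"
  by (intro differentiable_Jc grad_diff)

lemma nu_diff: "v \<in> U \<Longrightarrow> (\<lambda>w. Jc (pd l F w)) differentiable (at v)"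
  by (intro differentiable_Jc dF1)

lemma Hf_diff: "v \<in> U \<Longrightarrow> (\<lambda>w. Hf F f w j m) differentiable (at v)"
  unfolding Hf_def by (intro differentiable_diff differentiable_inner df2 dF2 grad_diff)

lemma pdV_n:
  assumes v: "v \<in> U"
  shows "inner (pd i (\<lambda>w. Jc (grad F f w)) v) (Jc (pd m F v)) = Hf F f v i m"
proof -
  have "pd i (\<lambda>w. inner (Jc (grad F f w)) (Jc (pd m F w))) v = pd i (pd m f) v"
    using pd_local[OF U v, of "\<lambda>w. inner (Jc (grad F f w)) (Jc (pd m F w))" "pd m f"] V_n by simp
  moreover have "pd i (\<lambda>w. inner (Jc (grad F f w)) (Jc (pd m F w))) v
     = inner (pd i (\<lambda>w. Jc (grad F f w)) v) (Jc (pd m F v)) + inner (grad F f v) (pd i (pd m F) v)"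
    using pd_inner[OF V_diff[OF v] nu_diff[OF v]] pd_Jc[OF dF1[OF v]] by (simp add: inner_Jc_Jc)
  ultimately show ?thesis unfolding Hf_def by simp
qed

lemma pdG_e:
  assumes v: "v \<in> U"
  shows "inner (pd i (grad F f) v) (pd l F v) = Hf F f v i l"
proof -
  have "pd i (\<lambda>w. inner (grad F f w) (pd l F w)) v = pd i (pd l f) v"
    using pd_local[OF U v, of "\<lambda>w. inner (grad F f w) (pd l F w)" "pd l f"] grad_e by simp
  moreover have "pd i (\<lambda>w. inner (grad F f w) (pd l F w)) v
     = inner (pd i (grad F f) v) (pd l F v) + inner (grad F f v) (pd i (pd l F) v)"
    using pd_inner[OF grad_diff[OF v] dF1[OF v]] by simp
  ultimately show ?thesis unfolding Hf_def by simp
qed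

lemma pdG_n:
  assumes v: "v \<in> U"
  shows "inner (pd i (grad F f) v) (Jc (pd l F v)) = inner (Jc (grad F f v)) (pd i (pd l F) v)"
proof -
  have "pd i (\<lambda>w. inner (grad F f w) (Jc (pd l F w))) v = pd i (\<lambda>w. 0) v"
    using pd_local[OF U v, of "\<lambda>w. inner (grad F f w) (Jc (pd l F w))" "\<lambda>w. 0"] grad_n by simp
  moreover have "pd i (\<lambda>w. inner (grad F f w) (Jc (pd l F w))) v
     = inner (pd i (grad F f) v) (Jc (pd l F v)) + inner (grad F f v) (Jc (pd i (pd l F) v))"
    using pd_inner[OF grad_diff[OF v] nu_diff[OF v]] pd_Jc[OF dF1[OF v]] by simp
  ultimately show ?thesis by (simp add: pd_const inner_Jc_left)
qed

lemma W_eq: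
  assumes v: "v \<in> U"
  shows "nabn F j (\<lambda>w. Jc (grad F f w)) v = (\<Sum>k\<in>UNIV. \<Sum>l\<in>UNIV. (ginv F v k l * Hf F f v j l) *\<^sub>R Jc (pd k F v))"
  unfolding nabn_def nproj_eq[OF v] nrep_def using pdV_n[OF v] by simp

lemma W_diff:
  assumes v: "v \<in> U"
  shows "nabn F j (\<lambda>w. Jc (grad F f w)) differentiable (at v)"
proof -
  have d: "(\<lambda>w. \<Sum>k\<in>UNIV. \<Sum>l\<in>UNIV. (ginv F w k l * Hf F f w j l) *\<^sub>R Jc (pd k F w)) differentiable (at v)"
    by (intro differentiable_sum ballI finite differentiable_scaleR' differentiable_mult gi_diff Hf_diff nu_diff v)
  show ?thesis using diff_local[OF U v _ d, of "nabn F j (\<lambda>w. Jc (grad F f w))"] W_eq by simp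
qed

lemma W_n: "v \<in> U \<Longrightarrow> inner (nabn F j (\<lambda>w. Jc (grad F f w)) v) (Jc (pd m F v)) = Hf F f v j m"
  unfolding nabn_def using inner_nproj_n pdV_n by simp

end


context LS begin

lemma pdG_any:
  assumes v: "v \<in> U"
  shows "inner (pd i (grad F f) v) Y =
    (\<Sum>k\<in>UNIV. \<Sum>l\<in>UNIV. ginv F v k l * inner Y (pd l F v) * Hf F f v i k) +
    (\<Sum>k\<in>UNIV. \<Sum>l\<in>UNIV. ginv F v k l * inner Y (Jc (pd l F v)) * inner (Jc (grad F f v)) (pd i (pd k F) v))"
proof -
  have "inner (pd i (grad F f) v) Y = inner (pd i (grad F f) v) (tproj F v Y + nrep F v Y)"
    using decomp[OF v, of Y] by simp
  also have "\<dots> = (\<Sum>k\<in>UNIV. \<Sum>l\<in>UNIV. ginv F v k l * inner Y (pd l F v) * inner (pd i (grad F f) v) (pd k F v)) +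
    (\<Sum>k\<in>UNIV. \<Sum>l\<in>UNIV. ginv F v k l * inner Y (Jc (pd l F v)) * inner (pd i (grad F f) v) (Jc (pd k F v)))"
    unfolding tproj_def nrep_def by (simp add: inner_add_right inner_sum_right)
  finally show ?thesis using pdG_e[OF v] pdG_n[OF v] by simp
qed

lemma Hf_pd:
  assumes v: "v \<in> U"
  shows "pd i (\<lambda>w. Hf F f w j m) v = pd i (pd j (pd m f)) v
     - inner (pd i (grad F f) v) (pd j (pd m F) v) - inner (grad F f v) (pd i (pd j (pd m F)) v)"
  unfolding Hf_def using pd_diff[OF df2[OF v] differentiable_inner[OF grad_diff[OF v] dF2[OF v]]]
    pd_inner[OF grad_diff[OF v] dF2[OF v]] by simp

lemma T1_piece:
  assumes v: "v \<in> U"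
  shows "inner (nabn F i (nabn F j (\<lambda>w. Jc (grad F f w))) v) (Jc (pd m F v)) =
     pd i (\<lambda>w. Hf F f w j m) v - (\<Sum>k\<in>UNIV. \<Sum>l\<in>UNIV. ginv F v k l * Hf F f v j l * inner (pd k F v) (pd i (pd m F) v))"
proof -
  let ?W = "nabn F j (\<lambda>w. Jc (grad F f w))"
  have "pd i (\<lambda>w. inner (?W w) (Jc (pd m F w))) v = pd i (\<lambda>w. Hf F f w j m) v"
    using pd_local[OF U v, of "\<lambda>w. inner (?W w) (Jc (pd m F w))" "\<lambda>w. Hf F f w j m"] W_n by simp
  moreover have "pd i (\<lambda>w. inner (?W w) (Jc (pd m F w))) v =
      inner (pd i ?W v) (Jc (pd m F v)) + inner (?W v) (Jc (pd i (pd m F) v))"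
    using pd_inner[OF W_diff[OF v] nu_diff[OF v]] pd_Jc[OF dF1[OF v]] by simp
  moreover have "inner (?W v) (Jc (pd i (pd m F) v)) =
      (\<Sum>k\<in>UNIV. \<Sum>l\<in>UNIV. ginv F v k l * Hf F f v j l * inner (pd k F v) (pd i (pd m F) v))"
    unfolding W_eq[OF v] by (simp add: inner_sum_left inner_Jc_Jc)
  moreover have "inner (nabn F i ?W v) (Jc (pd m F v)) = inner (pd i ?W v) (Jc (pd m F v))"
    unfolding nabn_def[of F i ?W] using inner_nproj_n[OF v] by simp
  ultimately show ?thesis by simp
qed

lemma laplace_eq:
  assumes v: "v \<in> U"
  shows "laplace F f v = (\<Sum>i\<in>UNIV. \<Sum>j\<in>UNIV. ginv F v i j * Hf F f v i j)"
proof -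
  have "(\<Sum>k\<in>UNIV. christoffel F v k i j * pd k f v) = inner (grad F f v) (pd i (pd j F) v)" for i j
  proof -
    have "(\<Sum>k\<in>UNIV. christoffel F v k i j * pd k f v)
        = (\<Sum>k\<in>UNIV. \<Sum>l\<in>UNIV. ginv F v k l * inner (pd i (pd j F) v) (pd l F v) * pd k f v)"
      by (simp add: christoffel_def sum_distrib_right)
    also have "\<dots> = (\<Sum>l\<in>UNIV. \<Sum>k\<in>UNIV. ginv F v k l * inner (pd i (pd j F) v) (pd l F v) * pd k f v)"
      by (rule sum.swap)
    also have "\<dots> = inner (grad F f v) (pd i (pd j F) v)"
      unfolding grad_def inner_sum_left
      by (intro sum.cong refl) (simp add: gi_sym[OF v] inner_commute ac_simps)
    finally show ?thesis .
  qed
  then show ?thesis unfolding laplace_def Hf_def by simp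
qed

lemma gi_pd:
  assumes v: "v \<in> U"
  shows "pd m (\<lambda>w. ginv F w i j) v = - (\<Sum>a\<in>UNIV. \<Sum>b\<in>UNIV. ginv F v i a *
      (inner (pd m (pd a F) v) (pd b F v) + inner (pd a F v) (pd m (pd b F) v)) * ginv F v b j)"
proof -
  have dg: "pd m (\<lambda>w. inner (pd a F w) (pd b F w)) v = inner (pd m (pd a F) v) (pd b F v) + inner (pd a F v) (pd m (pd b F) v)" for a b
    using pd_inner[OF dF1[OF v] dF1[OF v]] by simp
  define D where "D a b = pd m (\<lambda>w. ginv F w a b) v" for a b
  define dG where "dG a b = inner (pd m (pd a F) v) (pd b F v) + inner (pd a F v) (pd m (pd b F) v)" for a b
  have eq: "(\<Sum>b\<in>UNIV. D a b * inner (pd b F v) (pd c F v)) + (\<Sum>b\<in>UNIV. ginv F v a b * dG b c) = 0" for a c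
  proof -
    have "pd m (\<lambda>w. \<Sum>b\<in>UNIV. ginv F w a b * inner (pd b F w) (pd c F w)) v = pd m (\<lambda>w. if a = c then 1 else 0) v"
      using pd_local[OF U v, of "\<lambda>w. \<Sum>b\<in>UNIV. ginv F w a b * inner (pd b F w) (pd c F w)" "\<lambda>w. if a = c then 1 else 0"]
        gi_g by simp
    moreover have "pd m (\<lambda>w. \<Sum>b\<in>UNIV. ginv F w a b * inner (pd b F w) (pd c F w)) v
       = (\<Sum>b\<in>UNIV. D a b * inner (pd b F v) (pd c F v) + ginv F v a b * dG b c)"
      by (simp add: pd_sum pd_mult differentiable_mult gi_diff[OF v] differentiable_inner dF1[OF v] D_def dG_def dg)
    ultimately show ?thesis by (simp add: pd_const sum.distrib)
  qed
  have "D i j = (\<Sum>c\<in>UNIV. (\<Sum>b\<in>UNIV. D i b * inner (pd b F v) (pd c F v)) * ginv F v c j)"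
  proof -
    have "(\<Sum>c\<in>UNIV. (\<Sum>b\<in>UNIV. D i b * inner (pd b F v) (pd c F v)) * ginv F v c j)
        = (\<Sum>b\<in>UNIV. D i b * (\<Sum>c\<in>UNIV. inner (pd b F v) (pd c F v) * ginv F v c j))"
      apply (simp add: sum_distrib_left sum_distrib_right)
      apply (subst sum.swap)
      apply (simp add: mult.assoc)
      done
    also have "\<dots> = D i j" by (simp add: g_gi[OF v] if_distrib cong: if_cong)
    finally show ?thesis by simp
  qed
  also have "\<dots> = (\<Sum>c\<in>UNIV. - (\<Sum>b\<in>UNIV. ginv F v i b * dG b c) * ginv F v c j)"
  proof -
    have e2: "(\<Sum>b\<in>UNIV. D i b * inner (pd b F v) (pd c F v)) = - (\<Sum>b\<in>UNIV. ginv F v i b * dG b c)" for c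
      using eq[of i c] by (simp add: eq_neg_iff_add_eq_0)
    show ?thesis by (simp only: e2)
  qed
  also have "\<dots> = - (\<Sum>a\<in>UNIV. \<Sum>b\<in>UNIV. ginv F v i a * dG a b * ginv F v b j)"
    apply (simp add: sum_distrib_right sum_negf)
    apply (subst sum.swap)
    apply simp
    done
  finally show ?thesis unfolding D_def dG_def .
qed

end


context LS begin

lemma Gs: "v \<in> U \<Longrightarrow> inner (pd i (pd j F) v) X = inner (pd j (pd i F) v) X"
  using sym2[OF U sF, of v i j] by simp

lemma hs2:
  assumes v: "v \<in> U"
  shows "inner (pd i (pd j F) v) (Jc (pd l F v)) = inner (pd i (pd l F) v) (Jc (pd j F v))"
proof -
  have "pd i (\<lambda>w. inner (Jc (pd j F w)) (pd l F w)) v = pd i (\<lambda>w. 0) v"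
    using pd_local[OF U v, of "\<lambda>w. inner (Jc (pd j F w)) (pd l F w)" "\<lambda>w. 0"] lag0 by simp
  moreover have "pd i (\<lambda>w. inner (Jc (pd j F w)) (pd l F w)) v
     = inner (Jc (pd i (pd j F) v)) (pd l F v) + inner (Jc (pd j F v)) (pd i (pd l F) v)"
    using pd_inner[OF nu_diff[OF v] dF1[OF v]] pd_Jc[OF dF1[OF v]] by simp
  ultimately show ?thesis by (simp add: pd_const inner_Jc_left inner_commute)
qed

lemma Hs: "v \<in> U \<Longrightarrow> Hf F f v i j = Hf F f v j i"
  unfolding Hf_def using sym2[OF U sf, of v i j] sym2[OF U sF, of v i j] by simp

lemma selfshr:
  assumes v: "v \<in> U"
  shows "inner (F v) (Jc (pd l F v)) = -2 * (\<Sum>a\<in>UNIV. \<Sum>b\<in>UNIV. ginv F v a b * inner (pd a (pd b F) v) (Jc (pd l F v)))"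
proof -
  have "inner (meancurv F v) (Jc (pd l F v)) = inner (- (1/2) *\<^sub>R nproj F v (F v)) (Jc (pd l F v))"
    using ss v unfolding self_shrinker_on_def by simp
  moreover have "inner (meancurv F v) (Jc (pd l F v)) = (\<Sum>a\<in>UNIV. \<Sum>b\<in>UNIV. ginv F v a b * inner (pd a (pd b F) v) (Jc (pd l F v)))"
    unfolding meancurv_def sff_def by (simp add: inner_sum_left inner_nproj_n[OF v])
  ultimately show ?thesis using inner_nproj_n[OF v] by simp
qed

lemma V_e': "v \<in> U \<Longrightarrow> inner (pd l F v) (Jc (grad F f v)) = 0"
  using V_e by (simp add: inner_commute)

lemma sff_V:
  assumes v: "v \<in> U"
  shows "inner (sff F v i j) (Jc (grad F f v)) = inner (Jc (grad F f v)) (pd i (pd j F) v)"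
proof -
  have "inner (tproj F v (pd i (pd j F) v)) (Jc (grad F f v)) = 0"
    unfolding tproj_def by (simp add: inner_sum_left V_e'[OF v])
  then show ?thesis unfolding sff_def nproj_def by (simp add: inner_diff_left inner_diff_right inner_commute)
qed

lemma sff_n: "v \<in> U \<Longrightarrow> inner (sff F v k l) (Jc (pd m F v)) = inner (pd k (pd l F) v) (Jc (pd m F v))"
  unfolding sff_def using inner_nproj_n by simp

lemma Jgrad_e: "v \<in> U \<Longrightarrow> inner (Jc (grad F \<phi> v)) (pd l F v) = 0"
  unfolding grad_def Jc_sum Jc_scaleR using inner_ncomb_e[of v "\<lambda>j. pd j \<phi> v"] by simp

lemma Jgrad_n: "v \<in> U \<Longrightarrow> inner (Jc (grad F \<phi> v)) (Jc (pd l F v)) = pd l \<phi> v"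
  unfolding grad_def Jc_sum Jc_scaleR using inner_ncomb_n[of v "\<lambda>j. pd j \<phi> v"] by simp

lemma nabn_e: "v \<in> U \<Longrightarrow> inner (nabn F k W v) (pd p F v) = 0"
  unfolding nabn_def using inner_nproj_e by simp

lemma sff_e: "v \<in> U \<Longrightarrow> inner (sff F v k l) (pd p F v) = 0"
  unfolding sff_def using inner_nproj_e by simp

lemma Lop_e:
  assumes u: "u \<in> U"
  shows "inner (Lop F (\<lambda>v. Jc (grad F f v)) u) (pd p F u) = 0"
  unfolding Lop_def nlaplace_def
  by (simp add: inner_add_left inner_diff_left inner_sum_left nabn_e[OF u] sff_e[OF u] V_e[OF u])

end


context LS begin

lemma T1_full:
  assumes u: "u \<in> U"
  shows "inner (nabn F i (nabn F j (\<lambda>w. Jc (grad F f w))) u) (Jc (pd m F u)) =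
    (pd i (pd j (pd m f)) u - ((\<Sum>k\<in>UNIV. \<Sum>l\<in>UNIV. ginv F u k l * inner (pd j (pd m F) u) (pd l F u) * Hf F f u i k)
       + (\<Sum>k\<in>UNIV. \<Sum>l\<in>UNIV. ginv F u k l * inner (pd j (pd m F) u) (Jc (pd l F u)) * inner (Jc (grad F f u)) (pd i (pd k F) u)))
       - inner (grad F f u) (pd i (pd j (pd m F)) u))
    - (\<Sum>k\<in>UNIV. \<Sum>l\<in>UNIV. ginv F u k l * Hf F f u j l * inner (pd i (pd m F) u) (pd k F u))"
  unfolding T1_piece[OF u] Hf_pd[OF u] pdG_any[OF u] by (simp add: inner_commute)

lemma Lop_n:
  assumes u: "u \<in> U"
  shows "inner (Lop F (\<lambda>v. Jc (grad F f v)) u) (Jc (pd m F u)) =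
  (\<Sum>i\<in>UNIV. \<Sum>j\<in>UNIV. ginv F u i j * ((pd i (pd j (pd m f)) u - ((\<Sum>k\<in>UNIV. \<Sum>l\<in>UNIV. ginv F u k l * inner (pd j (pd m F) u) (pd l F u) * Hf F f u i k)
       + (\<Sum>k\<in>UNIV. \<Sum>l\<in>UNIV. ginv F u k l * inner (pd j (pd m F) u) (Jc (pd l F u)) * inner (Jc (grad F f u)) (pd i (pd k F) u)))
       - inner (grad F f u) (pd i (pd j (pd m F)) u))
       - (\<Sum>k\<in>UNIV. \<Sum>l\<in>UNIV. ginv F u k l * Hf F f u j l * inner (pd i (pd m F) u) (pd k F u))
       - (\<Sum>k\<in>UNIV. (\<Sum>l\<in>UNIV. ginv F u k l * inner (pd i (pd j F) u) (pd l F u)) * Hf F f u k m)))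
   - 1/2 * (\<Sum>k\<in>UNIV. (\<Sum>l\<in>UNIV. ginv F u k l * inner (F u) (pd l F u)) * Hf F f u k m)
   + (\<Sum>i\<in>UNIV. \<Sum>j\<in>UNIV. \<Sum>k\<in>UNIV. \<Sum>l\<in>UNIV. ginv F u i k * ginv F u j l * inner (Jc (grad F f u)) (pd i (pd j F) u) * inner (pd k (pd l F) u) (Jc (pd m F u)))
   + 1/2 * pd m f u"
proof -
  have A: "inner (nlaplace F (\<lambda>v. Jc (grad F f v)) u) (Jc (pd m F u)) =
     (\<Sum>i\<in>UNIV. \<Sum>j\<in>UNIV. ginv F u i j * (inner (nabn F i (nabn F j (\<lambda>w. Jc (grad F f w))) u) (Jc (pd m F u))
       - (\<Sum>k\<in>UNIV. christoffel F u k i j * Hf F f u k m)))"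
    unfolding nlaplace_def by (simp add: inner_sum_left inner_diff_left W_n[OF u])
  have B: "(\<Sum>k\<in>UNIV. christoffel F u k i j * Hf F f u k m) = (\<Sum>k\<in>UNIV. (\<Sum>l\<in>UNIV. ginv F u k l * inner (pd i (pd j F) u) (pd l F u)) * Hf F f u k m)" for i j
    by (simp add: christoffel_def)
  have C: "inner (Lop F (\<lambda>v. Jc (grad F f v)) u) (Jc (pd m F u)) =
     inner (nlaplace F (\<lambda>v. Jc (grad F f v)) u) (Jc (pd m F u))
   - 1/2 * (\<Sum>k\<in>UNIV. (\<Sum>l\<in>UNIV. ginv F u k l * inner (F u) (pd l F u)) * Hf F f u k m)
   + (\<Sum>i\<in>UNIV. \<Sum>j\<in>UNIV. \<Sum>k\<in>UNIV. \<Sum>l\<in>UNIV. ginv F u i k * ginv F u j l * inner (Jc (grad F f u)) (pd i (pd j F) u) * inner (pd k (pd l F) u) (Jc (pd m F u)))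
   + 1/2 * pd m f u"
    unfolding Lop_def
    by (simp add: inner_add_left inner_diff_left inner_sum_left W_n[OF u] sff_V[OF u] sff_n[OF u] V_n[OF u] xT_coord_def)
  show ?thesis unfolding C A B T1_full[OF u] ..
qed

lemma RHS_val:
  assumes u: "u \<in> U"
  shows "pd m (\<lambda>v. driftL F f v + f v) u =
   (\<Sum>i\<in>UNIV. \<Sum>j\<in>UNIV. (- (\<Sum>a\<in>UNIV. \<Sum>b\<in>UNIV. ginv F u i a * (inner (pd m (pd a F) u) (pd b F u) + inner (pd m (pd b F) u) (pd a F u)) * ginv F u b j)) * Hf F f u i j
       + ginv F u i j * (pd i (pd j (pd m f)) u - ((\<Sum>k\<in>UNIV. \<Sum>l\<in>UNIV. ginv F u k l * inner (pd i (pd j F) u) (pd l F u) * Hf F f u m k)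
            + (\<Sum>k\<in>UNIV. \<Sum>l\<in>UNIV. ginv F u k l * inner (pd i (pd j F) u) (Jc (pd l F u)) * inner (Jc (grad F f u)) (pd m (pd k F) u))) - inner (grad F f u) (pd i (pd j (pd m F)) u)))
   - 1/2 * (pd m f u + (\<Sum>k\<in>UNIV. \<Sum>l\<in>UNIV. ginv F u k l * inner (F u) (pd l F u) * Hf F f u m k)
       + (\<Sum>k\<in>UNIV. \<Sum>l\<in>UNIV. ginv F u k l * (-2 * (\<Sum>a\<in>UNIV. \<Sum>b\<in>UNIV. ginv F u a b * inner (pd a (pd b F) u) (Jc (pd l F u)))) * inner (Jc (grad F f u)) (pd m (pd k F) u)))
   + pd m f u"
proof -
  define lapr where "lapr w = (\<Sum>i\<in>UNIV. \<Sum>j\<in>UNIV. ginv F w i j * Hf F f w i j)" for w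
  define I where "I w = inner (F w) (grad F f w)" for w
  have dl: "lapr differentiable (at u)" unfolding lapr_def
    by (intro differentiable_sum ballI finite differentiable_mult gi_diff Hf_diff u)
  have dI: "I differentiable (at u)" unfolding I_def by (intro differentiable_inner dF0 grad_diff u)
  have loc: "pd m (\<lambda>v. driftL F f v + f v) u = pd m (\<lambda>w. lapr w - 1/2 * I w + f w) u"
    using pd_local[OF U u, of "\<lambda>v. driftL F f v + f v" "\<lambda>w. lapr w - 1/2 * I w + f w"]
      laplace_eq unfolding driftL_def lapr_def I_def by simp
  have s1: "pd m (\<lambda>w. lapr w - 1/2 * I w + f w) u = pd m lapr u - 1/2 * pd m I u + pd m f u"
  proof -
    have d2: "(\<lambda>w. 1/2 * I w) differentiable (at u)" using dI by simp
    have "pd m (\<lambda>w. lapr w - 1/2 * I w + f w) u = pd m (\<lambda>w. lapr w - 1/2 * I w) u + pd m f u"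
      using pd_add[OF differentiable_diff[OF dl d2] df0[OF u]] by simp
    also have "pd m (\<lambda>w. lapr w - 1/2 * I w) u = pd m lapr u - pd m (\<lambda>w. 1/2 * I w) u"
      using pd_diff[OF dl d2] by simp
    also have "pd m (\<lambda>w. 1/2 * I w) u = 1/2 * pd m I u"
      using pd_mult[OF differentiable_const dI, of m "1/2"] by (simp add: pd_const)
    finally show ?thesis .
  qed
  have s2: "pd m lapr u = (\<Sum>i\<in>UNIV. \<Sum>j\<in>UNIV. pd m (\<lambda>w. ginv F w i j) u * Hf F f u i j + ginv F u i j * pd m (\<lambda>w. Hf F f w i j) u)"
    unfolding lapr_def
    by (simp add: pd_sum pd_mult differentiable_mult gi_diff[OF u] Hf_diff[OF u])
  have s3: "pd m I u = pd m f u + inner (pd m (grad F f) u) (F u)"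
    unfolding I_def using pd_inner[OF dF0[OF u] grad_diff[OF u]] grad_e[OF u]
    by (simp add: inner_commute)
  show ?thesis
    unfolding loc s1 s2 s3 gi_pd[OF u] Hf_pd[OF u] pdG_any[OF u] selfshr[OF u]
      sym3[OF U sf u, symmetric] sym3[OF U sF u, symmetric]
    by (simp add: inner_commute)
qed

lemma Lop_n_final:
  assumes u: "u \<in> U"
  shows "inner (Lop F (\<lambda>v. Jc (grad F f v)) u) (Jc (pd m F u)) = pd m (\<lambda>v. driftL F f v + f v) u"
  unfolding Lop_n[OF u] RHS_val[OF u]
  by (rule alg_identity[where gi="ginv F u" and \<Gamma>="\<lambda>i j l. inner (pd i (pd j F) u) (pd l F u)"
        and hh="\<lambda>i j l. inner (pd i (pd j F) u) (Jc (pd l F u))" and H="Hf F f u"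
        and B="\<lambda>i k. inner (Jc (grad F f u)) (pd i (pd k F) u)" and ffz="\<lambda>i j. pd i (pd j (pd m f)) u"
        and ccz="\<lambda>i j. inner (grad F f u) (pd i (pd j (pd m F)) u)" and xe="\<lambda>l. inner (F u) (pd l F u)" and fm="pd m f u" and m=m,
      OF gi_sym[OF u] Gs[OF u] Hs[OF u] Gs[OF u] hs2[OF u]])

lemma main:
  assumes u: "u \<in> U"
  shows "Lop F (\<lambda>v. Jc (grad F f v)) u = Jc (grad F (\<lambda>v. driftL F f v + f v) u)"
proof -
  define Y where "Y = Lop F (\<lambda>v. Jc (grad F f v)) u - Jc (grad F (\<lambda>v. driftL F f v + f v) u)"
  have "Y = 0"
  proof (rule span_all[OF u])
    fix p
    show "inner Y (pd p F u) = 0" unfolding Y_def by (simp add: inner_diff_left Lop_e[OF u] Jgrad_e[OF u])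
    show "inner Y (Jc (pd p F u)) = 0" unfolding Y_def by (simp add: inner_diff_left Lop_n_final[OF u] Jgrad_n[OF u])
  qed
  then show ?thesis unfolding Y_def by simp
qed

end


theorem theorem5p1:
  fixes U :: "(real^'n::finite) set"
    and F :: "real^'n \<Rightarrow> complex^'n"
    and f :: "real^'n \<Rightarrow> real"
  assumes "open U"
    and "smooth_on U F"
    and "immersion_on U F"
    and "lagrangian_on U F"
    and "self_shrinker_on U F"
    and "smooth_on U f"
    and "u \<in> U"
  shows "Lop F (\<lambda>v. Jc (grad F f v)) u = Jc (grad F (\<lambda>v. driftL F f v + f v) u)"
proof -
  interpret LS U F f
    using assms by unfold_locales auto
  show ?thesis using main[OF assms(7)] .
qed

end
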